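(* Let $m\ge1$, $n=2m$, and let $\mathcal{S}_m\subset\mathcal{S}_n\subset\mathcal{T}$ be nested subsets of the training set of sizes $m$ and $n$, with regularized empirical risks $R_m,R_n$ and minimizers $\mathbf{w}_m^*,\mathbf{w}_n^*$. Let $\mathbf{w}_m$ satisfy $\mathbb{E}[R_m(\mathbf{w}_m)-R_m(\mathbf{w}_m^* )]\le V_m$. Let an iterative descent method (deterministic or stochastic) be applied to $R_n$ which is linearly convergent with factor $0\le\rho_n<1$, i.e., for any initial point $\mathbf{u}_0$, its iterate $\mathbf{u}_s$ after $s$ iterations satisfies $\mathbb{E}[R_n(\mathbf{u}_s)-R_n(\mathbf{w}_n^* )]\le\rho_n^{s}\,(R_n(\mathbf{u}_0)-R_n(\mathbf{w}_n^* ))$ (expectation over the method's internal randomness). Let $\mathbf{w}_n$ be the output of $s_n$ iterations of this method started at $\mathbf{w}_m$. If $$s_n\ \ge\ -\frac{\log\left[3\cdot 2^\alpha+(2^\alpha-1)\left(2+\frac{c}{2}\|\mathbf{w}^*\|^2\right)\right]}{\log\rho_n},$$ then $\mathbb{E}[R_n(\mathbf{w}_n)-R_n(\mathbf{w}_n^* )]\le V_n$.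
   Context: Let $Z$ be a random variable with distribution $P$ on a space $\mathcal{Z}$ and $f:\mathbb{R}^p\times\mathcal{Z}\to\mathbb{R}$ a loss function. The expected loss is $L(\mathbf{w})=\mathbb{E}_Z[f(\mathbf{w},Z)]$ and $\mathbf{w}^*$ denotes a minimizer of $L$. The training set $\mathcal{T}=\{z_1,\dots,z_N\}$ consists of $N$ independent samples from $P$. For a (fixed, data-independent) subset $\mathcal{S}\subseteq\mathcal{T}$ with $k$ elements, the empirical loss is $L_{\mathcal{S}}(\mathbf{w})=\frac1k\sum_{z\in\mathcal{S}}f(\mathbf{w},z)$; for the sets $\mathcal{S}_k$ we write $L_k=L_{\mathcal{S}_k}$. Statistical accuracy: $V_k=\gamma/k^\alpha$ with constants $\gamma>0$ and $\alpha\in[0.5,1]$, and it is assumed that for every $k$ and every set $\mathcal{S}$ of $k$ independent samples from $P$, $\mathbb{E}[\sup_{\mathbf{w}\in\mathbb{R}^p}|L(\mathbf{w})-L_{\mathcal{S}}(\mathbf{w})|]\le V_k$ (expectation over the samples). For a constant $c>0$ the regularized empirical risk is $R_k(\mathbf{w})=L_k(\mathbf{w})+\frac{cV_k}{2}\|\mathbf{w}\|^2$, with minimizer $\mathbf{w}_k^*$. Assumption: for every $z$, $f(\cdot,z)$ is convex with $M$-Lipschitz continuous gradient. In the conclusion the expectation is over the training samples and the randomness of the method. *)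

theory Defs
  imports "HOL-Probability.Probability"
begin

definition stat_acc :: "real \<Rightarrow> real \<Rightarrow> nat \<Rightarrow> real" where
  "stat_acc \<gamma> \<alpha> k = \<gamma> / (real k powr \<alpha>)"

definition exp_loss :: "'z measure \<Rightarrow> ('w \<Rightarrow> 'z \<Rightarrow> real) \<Rightarrow> 'w \<Rightarrow> real" where
  "exp_loss P f w = (\<integral>z. f w z \<partial>P)"

definition emp_loss :: "('w \<Rightarrow> 'z \<Rightarrow> real) \<Rightarrow> (nat \<Rightarrow> 'z) \<Rightarrow> nat set \<Rightarrow> 'w \<Rightarrow> real" where
  "emp_loss f z S w = (\<Sum>i\<in>S. f w (z i)) / real (card S)"

definition reg_risk :: "('w::real_normed_vector \<Rightarrow> 'z \<Rightarrow> real) \<Rightarrow> (nat \<Rightarrow> 'z) \<Rightarrow> nat set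
    \<Rightarrow> real \<Rightarrow> real \<Rightarrow> real \<Rightarrow> 'w \<Rightarrow> real" where
  "reg_risk f z S c \<gamma> \<alpha> w = emp_loss f z S w + c * stat_acc \<gamma> \<alpha> (card S) / 2 * (norm w)\<^sup>2"

end

theory Submission
  imports Defs
begin


lemma (in prob_space) indep_sets_reindex_sub:
  assumes ind: "indep_sets F I" and inj: "inj_on e J" and sub: "e ` J \<subseteq> I"
  shows "indep_sets (\<lambda>j. F (e j)) J"
  unfolding indep_sets_def
proof (intro conjI ballI allI impI)
  fix j assume "j \<in> J" then show "F (e j) \<subseteq> events" using ind sub unfolding indep_sets_def by auto
next
  fix J' A assume J': "J' \<subseteq> J" "J' \<noteq> {}" "finite J'" and A: "A \<in> Pi J' (\<lambda>j. F (e j))"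
  define B where "B = (\<lambda>i. A (the_inv_into J' e i))"
  have injJ': "inj_on e J'" using inj J' inj_on_subset by blast
  have Bj: "B (e j) = A j" if "j \<in> J'" for j using that injJ' by (simp add: B_def the_inv_into_f_f)
  have "B \<in> Pi (e ` J') F" using A Bj by auto
  moreover have "e ` J' \<subseteq> I" "e ` J' \<noteq> {}" "finite (e ` J')" using J' sub by auto
  ultimately have "prob (\<Inter>i\<in>e ` J'. B i) = (\<Prod>i\<in>e ` J'. prob (B i))"
    using ind unfolding indep_sets_def by blast
  moreover have "(\<Inter>i\<in>e ` J'. B i) = (\<Inter>j\<in>J'. A j)" using Bj by auto
  moreover have "(\<Prod>i\<in>e ` J'. prob (B i)) = (\<Prod>j\<in>J'. prob (A j))"
    using prod.reindex[OF injJ', of "\<lambda>i. prob (B i)"] Bj by simp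
  ultimately show "prob (\<Inter>j\<in>J'. A j) = (\<Prod>j\<in>J'. prob (A j))" by simp
qed

lemma (in prob_space) indep_vars_reindex_sub:
  assumes ind: "indep_vars M' X I" and inj: "inj_on e J" and sub: "e ` J \<subseteq> I"
  shows "indep_vars (\<lambda>j. M' (e j)) (\<lambda>j. X (e j)) J"
  using ind sub indep_sets_reindex_sub[OF _ inj sub, of "\<lambda>i. { X i -` A \<inter> space M | A. A \<in> sets (M' i)}"]
  unfolding indep_vars_def2 by auto

lemma SUP_dense_eq:
  fixes g :: "'a::topological_space \<Rightarrow> 'b::{complete_linorder, linorder_topology}"
  assumes cont: "continuous_on UNIV g" and D: "\<And>X. open X \<Longrightarrow> X \<noteq> {} \<Longrightarrow> \<exists>d\<in>D. d \<in> X"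
  shows "(SUP w. g w) = (SUP w\<in>D. g w)"
proof (rule antisym)
  show "(SUP w\<in>D. g w) \<le> (SUP w. g w)" by (rule SUP_subset_mono) auto
  show "(SUP w. g w) \<le> (SUP w\<in>D. g w)"
  proof (rule SUP_least, rule ccontr)
    fix w assume "\<not> g w \<le> (SUP w\<in>D. g w)"
    then have lt: "(SUP w\<in>D. g w) < g w" by simp
    let ?X = "g -` {(SUP w\<in>D. g w)<..}"
    have "open ?X" using cont open_greaterThan open_vimage by blast
    moreover have "w \<in> ?X" using lt by simp
    ultimately obtain d where "d \<in> D" "d \<in> ?X" using D by blast
    then have "(SUP w\<in>D. g w) < g d" by simp
    moreover have "g d \<le> (SUP w\<in>D. g w)" using \<open>d \<in> D\<close> by (rule SUP_upper)
    ultimately show False by simp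
  qed
qed

lemma meas_SUP_cont:
  fixes G :: "'m \<Rightarrow> 'w::euclidean_space \<Rightarrow> ennreal"
  assumes cont: "\<And>x. x \<in> space M \<Longrightarrow> continuous_on UNIV (G x)"
    and meas: "\<And>w. (\<lambda>x. G x w) \<in> borel_measurable M"
  shows "(\<lambda>x. SUP w. G x w) \<in> borel_measurable M"
proof -
  obtain D :: "'w set" where Dc: "countable D" and D: "\<And>X. open X \<Longrightarrow> X \<noteq> {} \<Longrightarrow> \<exists>d\<in>D. d \<in> X"
    by (rule countable_dense_setE) blast
  have "(\<lambda>x. SUP w\<in>D. G x w) \<in> borel_measurable M"
    using Dc meas by (rule borel_measurable_SUP)
  moreover have "\<And>x. x \<in> space M \<Longrightarrow> (SUP w\<in>D. G x w) = (SUP w. G x w)"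
    using SUP_dense_eq[OF cont D] by metis
  ultimately show ?thesis using measurable_cong by (metis (no_types, lifting))
qed

lemma key_real:
  fixes lnM lnS lnW aM aS bM bS LM LS LW NM NS NW RmStar cn t :: real
  assumes "lnM = (aM + bM)/2" "lnS = (aS + bS)/2"
    and "RmStar \<le> aS + t*cn*NS" and "lnS + cn*NS \<le> lnW + cn*NW" and "LW \<le> LS"
    and "t \<ge> 1" "cn \<ge> 0" "NM \<ge> 0"
  shows "(lnM + cn*NM) - (lnS + cn*NS) \<le> (aM + t*cn*NM - RmStar)
     + (\<bar>LM - aM\<bar> + \<bar>LS - aS\<bar>)/2 + (\<bar>LM - bM\<bar> + \<bar>LS - bS\<bar>)/2
     + (t - 1) * (\<bar>LW - lnW\<bar> + \<bar>LS - lnS\<bar>) + (t - 1) * cn * NW"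
proof -
  have t1: "t - 1 \<ge> 0" using assms by simp
  have h1: "(t-1)*(cn*NS) \<le> (t-1)*(lnW - lnS + cn*NW)"
    by (rule mult_left_mono[OF _ t1]) (use assms(4) in linarith)
  have h2: "(t-1)*(lnW - lnS + cn*NW) \<le> (t-1)*(\<bar>LW - lnW\<bar> + \<bar>LS - lnS\<bar> + cn*NW)"
    by (rule mult_left_mono[OF _ t1]) (use assms in linarith)
  have h3: "cn*NM \<le> t*cn*NM"
    using mult_right_mono[OF assms(6), of "cn*NM"] assms by (simp add: mult.assoc)
  have e1: "t*cn*NS = cn*NS + (t-1)*(cn*NS)" by (simp add: algebra_simps)
  have e2: "(t-1)*(\<bar>LW - lnW\<bar> + \<bar>LS - lnS\<bar> + cn*NW) = (t - 1) * (\<bar>LW - lnW\<bar> + \<bar>LS - lnS\<bar>) + (t - 1) * cn * NW"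
    by (simp add: algebra_simps)
  have A: "lnM - aM \<le> (\<bar>LM - aM\<bar> + \<bar>LM - bM\<bar>)/2"
    using assms(1) abs_ge_self[of "LM - aM"] abs_ge_minus_self[of "LM - bM"] by argo
  have B: "-(lnS + cn*NS) \<le> -RmStar + (\<bar>LS - aS\<bar> + \<bar>LS - bS\<bar>)/2 + (t-1)*(cn*NS)"
    using assms(2,3) e1 abs_ge_minus_self[of "LS - aS"] abs_ge_self[of "LS - bS"] by argo
  have C: "(t-1)*(cn*NS) \<le> (t - 1) * (\<bar>LW - lnW\<bar> + \<bar>LS - lnS\<bar>) + (t - 1) * cn * NW"
    using h1 h2 e2 by argo
  show ?thesis using A B C h3 by argo
qed

lemma SUP_min_eq:
  fixes R :: "'a \<Rightarrow> real"
  assumes "\<And>w. R w0 \<le> R w"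
  shows "(SUP w. ennreal (a - R w)) = ennreal (a - R w0)"
proof (rule antisym)
  show "(SUP w. ennreal (a - R w)) \<le> ennreal (a - R w0)"
    by (rule SUP_least, rule ennreal_leI) (use assms in auto)
  show "ennreal (a - R w0) \<le> (SUP w. ennreal (a - R w))" by (rule SUP_upper) simp
qed

lemma avg_le:
  fixes A :: ennreal
  assumes "ennreal u \<le> A" "ennreal v \<le> A"
  shows "ennreal ((u+v)/2) \<le> A"
proof (cases "u \<le> v")
  case True
  then have "ennreal ((u+v)/2) \<le> ennreal v" by (intro ennreal_leI) simp
  then show ?thesis using assms(2) by (rule order_trans)
next
  case False
  then have "ennreal ((u+v)/2) \<le> ennreal u" by (intro ennreal_leI) simp
  then show ?thesis using assms(1) by (rule order_trans)
qed

lemma meas_f2: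
  fixes f :: "'w::euclidean_space \<Rightarrow> 'z \<Rightarrow> real"
  assumes fm: "(\<lambda>(w,z). f w z) \<in> borel_measurable (borel \<Otimes>\<^sub>M P)"
    and g: "g \<in> borel_measurable M" and h: "h \<in> measurable M P"
  shows "(\<lambda>x. f (g x) (h x)) \<in> borel_measurable M"
proof -
  have "(\<lambda>x. (g x, h x)) \<in> measurable M (borel \<Otimes>\<^sub>M P)" using g h by (rule measurable_Pair)
  then have "(\<lambda>x. (\<lambda>(w,z). f w z) (g x, h x)) \<in> borel_measurable M" using fm by (rule measurable_compose)
  then show ?thesis by simp
qed

lemma meas_emp:
  fixes f :: "'w::euclidean_space \<Rightarrow> 'z \<Rightarrow> real"
  assumes fm: "(\<lambda>(w,z). f w z) \<in> borel_measurable (borel \<Otimes>\<^sub>M P)"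
    and g: "g \<in> borel_measurable M" and Y: "\<And>i. i \<in> S \<Longrightarrow> Y i \<in> measurable M P"
  shows "(\<lambda>x. emp_loss f (\<lambda>i. Y i x) S (g x)) \<in> borel_measurable M"
  unfolding emp_loss_def
  by (intro borel_measurable_divide borel_measurable_sum borel_measurable_const meas_f2[OF fm g] Y)

lemma meas_reg:
  fixes f :: "'w::euclidean_space \<Rightarrow> 'z \<Rightarrow> real"
  assumes fm: "(\<lambda>(w,z). f w z) \<in> borel_measurable (borel \<Otimes>\<^sub>M P)"
    and g: "g \<in> borel_measurable M" and Y: "\<And>i. i \<in> S \<Longrightarrow> Y i \<in> measurable M P"
  shows "(\<lambda>x. reg_risk f (\<lambda>i. Y i x) S c \<gamma> \<alpha> (g x)) \<in> borel_measurable M"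
proof -
  have [measurable]: "(\<lambda>x. emp_loss f (\<lambda>i. Y i x) S (g x)) \<in> borel_measurable M"
    by (rule meas_emp[OF fm g Y])
  have [measurable]: "g \<in> borel_measurable M" by (rule g)
  show ?thesis unfolding reg_risk_def by measurable
qed

lemma cont_emp:
  assumes "\<And>i. i \<in> S \<Longrightarrow> continuous_on UNIV (\<lambda>w. f w (z i))"
  shows "continuous_on UNIV (\<lambda>w. emp_loss f z S w)"
proof (cases "card S = 0")
  case True then show ?thesis unfolding emp_loss_def by simp
next
  case False
  have "continuous_on UNIV (\<lambda>w. \<Sum>i\<in>S. f w (z i))"
    by (rule continuous_on_sum) (use assms in auto)
  then show ?thesis unfolding emp_loss_def using False
    by (intro continuous_on_divide continuous_on_const) auto
qed

lemma cont_reg: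
  fixes f :: "'w::real_normed_vector \<Rightarrow> 'z \<Rightarrow> real"
  assumes "\<And>i. i \<in> S \<Longrightarrow> continuous_on UNIV (\<lambda>w. f w (z i))"
  shows "continuous_on UNIV (\<lambda>w. reg_risk f z S c \<gamma> \<alpha> w)"
proof -
  have "continuous_on UNIV (\<lambda>w. emp_loss f z S w)" by (rule cont_emp) (rule assms)
  then show ?thesis unfolding reg_risk_def by (intro continuous_on_add continuous_intros) auto
qed


theorem theorem2:
  fixes P :: "'z measure" and \<Omega> :: "'o measure" and \<Xi> :: "'x measure"
    and f :: "'w::euclidean_space \<Rightarrow> 'z \<Rightarrow> real"
    and M c \<gamma> \<alpha> \<rho> :: real and N m n sn :: nat
    and Z :: "nat \<Rightarrow> 'o \<Rightarrow> 'z"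
    and Im In :: "nat set"
    and wstar :: 'w and wm wmstar wnstar :: "'o \<Rightarrow> 'w"
    and U :: "'o \<Rightarrow> 'w \<Rightarrow> nat \<Rightarrow> 'x \<Rightarrow> 'w"
  assumes P: "prob_space P"
    and \<Omega>: "prob_space \<Omega>"
    and \<Xi>: "prob_space \<Xi>"
    \<comment> \<open>loss: measurable, integrable, convex with M-Lipschitz gradient in w\<close>
    and f_meas: "(\<lambda>(w, z). f w z) \<in> borel_measurable (borel \<Otimes>\<^sub>M P)"
    and f_int: "\<forall>w. integrable P (f w)"
    and f_convex: "\<forall>z\<in>space P. convex_on UNIV (\<lambda>w. f w z)"
    and f_smooth: "\<forall>z\<in>space P. \<exists>g :: 'w \<Rightarrow> 'w.
        (\<forall>w. ((\<lambda>v. f v z) has_derivative (\<lambda>h. g w \<bullet> h)) (at w)) \<and>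
        (\<forall>w v. norm (g w - g v) \<le> M * norm (w - v))"
    \<comment> \<open>w* minimizes the expected loss\<close>
    and wstar: "\<forall>w. exp_loss P f wstar \<le> exp_loss P f w"
    \<comment> \<open>constants\<close>
    and c: "c > 0" and \<gamma>: "\<gamma> > 0" and \<alpha>: "1/2 \<le> \<alpha>" "\<alpha> \<le> 1"
    \<comment> \<open>statistical accuracy: for every k and every k independent samples from P\<close>
    and stat_acc: "\<forall>k\<ge>1. \<forall>Y :: nat \<Rightarrow> 'o \<Rightarrow> 'z.
        (prob_space.indep_vars \<Omega> (\<lambda>_. P) Y {..<k} \<and> (\<forall>i<k. distr \<Omega> P (Y i) = P)) \<longrightarrow>
        (\<integral>\<^sup>+ \<omega>. (SUP w. ennreal \<bar>exp_loss P f w - emp_loss f (\<lambda>i. Y i \<omega>) {..<k} w\<bar>) \<partial>\<Omega>)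
          \<le> ennreal (stat_acc \<gamma> \<alpha> k)"
    \<comment> \<open>training set: N independent samples from P\<close>
    and Z_indep: "prob_space.indep_vars \<Omega> (\<lambda>_. P) Z {..<N}"
    and Z_distr: "\<forall>i<N. distr \<Omega> P (Z i) = P"
    \<comment> \<open>nested subsets S_m of size m and S_n of size n = 2m\<close>
    and m: "m \<ge> 1" and n: "n = 2 * m"
    and sub: "Im \<subseteq> In" "In \<subseteq> {..<N}" and card: "card Im = m" "card In = n"
    \<comment> \<open>minimizers of the regularized risks\<close>
    and wmstar: "\<forall>\<omega>\<in>space \<Omega>. \<forall>w. reg_risk f (\<lambda>i. Z i \<omega>) Im c \<gamma> \<alpha> (wmstar \<omega>)
                                     \<le> reg_risk f (\<lambda>i. Z i \<omega>) Im c \<gamma> \<alpha> w"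
    and wnstar: "\<forall>\<omega>\<in>space \<Omega>. \<forall>w. reg_risk f (\<lambda>i. Z i \<omega>) In c \<gamma> \<alpha> (wnstar \<omega>)
                                     \<le> reg_risk f (\<lambda>i. Z i \<omega>) In c \<gamma> \<alpha> w"
    \<comment> \<open>w_m is V_m-accurate for R_m in expectation\<close>
    and wm_meas: "wm \<in> borel_measurable \<Omega>"
    and wm_acc: "(\<integral>\<^sup>+ \<omega>. ennreal (reg_risk f (\<lambda>i. Z i \<omega>) Im c \<gamma> \<alpha> (wm \<omega>)
                                 - reg_risk f (\<lambda>i. Z i \<omega>) Im c \<gamma> \<alpha> (wmstar \<omega>)) \<partial>\<Omega>)
                 \<le> ennreal (stat_acc \<gamma> \<alpha> m)"
    \<comment> \<open>the method applied to R_n is linearly convergent with factor rho\<close>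
    and \<rho>: "0 < \<rho>" "\<rho> < 1"
    and lin_conv: "\<forall>\<omega>\<in>space \<Omega>. \<forall>u0 s.
        (\<integral>\<^sup>+ \<xi>. ennreal (reg_risk f (\<lambda>i. Z i \<omega>) In c \<gamma> \<alpha> (U \<omega> u0 s \<xi>)
                          - reg_risk f (\<lambda>i. Z i \<omega>) In c \<gamma> \<alpha> (wnstar \<omega>)) \<partial>\<Xi>)
        \<le> ennreal (\<rho> ^ s * (reg_risk f (\<lambda>i. Z i \<omega>) In c \<gamma> \<alpha> u0
                             - reg_risk f (\<lambda>i. Z i \<omega>) In c \<gamma> \<alpha> (wnstar \<omega>)))"
    and wn_meas: "(\<lambda>(\<omega>, \<xi>). U \<omega> (wm \<omega>) sn \<xi>) \<in> borel_measurable (\<Omega> \<Otimes>\<^sub>M \<Xi>)"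
    \<comment> \<open>number of iterations\<close>
    and sn: "real sn \<ge> - ln (3 * 2 powr \<alpha> + (2 powr \<alpha> - 1) * (2 + c / 2 * (norm wstar)\<^sup>2)) / ln \<rho>"
  shows "(\<integral>\<^sup>+ \<omega>\<xi>. ennreal (reg_risk f (\<lambda>i. Z i (fst \<omega>\<xi>)) In c \<gamma> \<alpha>
                              (U (fst \<omega>\<xi>) (wm (fst \<omega>\<xi>)) sn (snd \<omega>\<xi>))
                          - reg_risk f (\<lambda>i. Z i (fst \<omega>\<xi>)) In c \<gamma> \<alpha> (wnstar (fst \<omega>\<xi>)))
           \<partial>(\<Omega> \<Otimes>\<^sub>M \<Xi>))
         \<le> ennreal (stat_acc \<gamma> \<alpha> n)"
proof -
  interpret O: prob_space \<Omega> by (rule \<Omega>)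
  interpret X: prob_space \<Xi> by (rule \<Xi>)
  interpret PX: pair_prob_space \<Omega> \<Xi> by unfold_locales
  define R where "R S \<omega> w = reg_risk f (\<lambda>i. Z i \<omega>) S c \<gamma> \<alpha> w" for S \<omega> w
  define E where "E S \<omega> w = emp_loss f (\<lambda>i. Z i \<omega>) S w" for S \<omega> w
  define L where "L = exp_loss P f"
  define Vm where "Vm = stat_acc \<gamma> \<alpha> m"
  define Vn where "Vn = stat_acc \<gamma> \<alpha> n"
  define t where "t = (2::real) powr \<alpha>"
  define cn where "cn = c * Vn / 2"
  define Im' where "Im' = In - Im"
  have Zm: "\<And>i. i < N \<Longrightarrow> Z i \<in> measurable \<Omega> P"
    using Z_indep unfolding O.indep_vars_def2 by auto
  have Zsp: "\<And>i \<omega>. i < N \<Longrightarrow> \<omega> \<in> space \<Omega> \<Longrightarrow> Z i \<omega> \<in> space P"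
    by (rule measurable_space[OF Zm])
  have fcont: "continuous_on UNIV (\<lambda>w. f w z)" if zP: "z \<in> space P" for z
  proof -
    obtain g where g: "\<forall>w. ((\<lambda>v. f v z) has_derivative (\<lambda>h. g w \<bullet> h)) (at w)"
      using bspec[OF f_smooth zP] by blast
    show ?thesis
    proof (rule continuous_at_imp_continuous_on, rule ballI)
      fix w :: 'w show "isCont (\<lambda>w. f w z) w" by (rule has_derivative_continuous[OF g[rule_format]])
    qed
  qed
  have Lconv: "convex_on UNIV L"
  proof (rule convex_onI)
    fix s :: real and x y :: 'w assume s: "0 < s" "s < 1"
    have "L ((1 - s) *\<^sub>R x + s *\<^sub>R y) = (\<integral>z. f ((1 - s) *\<^sub>R x + s *\<^sub>R y) z \<partial>P)"
      by (simp add: L_def exp_loss_def)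
    also have "\<dots> \<le> (\<integral>z. (1 - s) * f x z + s * f y z \<partial>P)"
    proof (rule integral_mono)
      show "integrable P (\<lambda>z. f ((1 - s) *\<^sub>R x + s *\<^sub>R y) z)" using f_int by blast
      show "integrable P (\<lambda>z. (1 - s) * f x z + s * f y z)" using f_int by auto
      fix z assume "z \<in> space P"
      then have "convex_on UNIV (\<lambda>w. f w z)" using f_convex by blast
      from convex_onD[OF this, of s x y] s
      show "f ((1 - s) *\<^sub>R x + s *\<^sub>R y) z \<le> (1 - s) * f x z + s * f y z" by simp
    qed
    also have "\<dots> = (1 - s) * L x + s * L y"
      using f_int by (simp add: L_def exp_loss_def)
    finally show "L ((1 - s) *\<^sub>R x + s *\<^sub>R y) \<le> (1 - s) * L x + s * L y" .
  qed simp
  have Lcont: "continuous_on UNIV L" using convex_on_continuous[OF open_UNIV Lconv] .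
  have finIn: "finite In" by (rule finite_subset[OF sub(2)]) simp
  have finIm: "finite Im" by (rule finite_subset[OF sub(1) finIn])
  have Im'sub: "Im' \<subseteq> {..<N}" using sub unfolding Im'_def by blast
  have cardIm': "card Im' = m" unfolding Im'_def using card_Diff_subset[OF finIm sub(1)] card n by simp
  have mpos: "real m > 0" using m by simp
  have E_split: "E In \<omega> w = (E Im \<omega> w + E Im' \<omega> w) / 2" for \<omega> w
  proof -
    have "(\<Sum>i\<in>In. f w (Z i \<omega>)) = (\<Sum>i\<in>Im'. f w (Z i \<omega>)) + (\<Sum>i\<in>Im. f w (Z i \<omega>))"
      unfolding Im'_def by (rule sum.subset_diff[OF sub(1) finIn])
    then show ?thesis unfolding E_def emp_loss_def using card cardIm' n mpos by (simp add: field_simps)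
  qed
  have R_eq: "R S \<omega> w = E S \<omega> w + c * stat_acc \<gamma> \<alpha> (card S) / 2 * (norm w)\<^sup>2" for S \<omega> w
    unfolding R_def E_def reg_risk_def ..
  have Vnpos: "Vn > 0" unfolding Vn_def stat_acc_def using \<gamma> n m by simp
  have Vrel: "Vm = t * Vn"
  proof -
    have "real n powr \<alpha> = 2 powr \<alpha> * real m powr \<alpha>" using n by (simp add: powr_mult)
    then show ?thesis unfolding Vm_def Vn_def stat_acc_def t_def using mpos by (simp add: field_simps)
  qed
  have t1: "t \<ge> 1" unfolding t_def using \<alpha> by (intro ge_one_powr_ge_zero) auto
  have cn0: "cn \<ge> 0" unfolding cn_def using c Vnpos by simp
  have cm: "c * stat_acc \<gamma> \<alpha> m / 2 = t * cn" unfolding cn_def Vm_def[symmetric] Vrel by simp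
  have cnn: "c * stat_acc \<gamma> \<alpha> n / 2 = cn" unfolding cn_def Vn_def ..
  have statS: "(\<integral>\<^sup>+\<omega>. (SUP w. ennreal \<bar>L w - E S \<omega> w\<bar>) \<partial>\<Omega>) \<le> ennreal (stat_acc \<gamma> \<alpha> (card S))"
    if S: "S \<subseteq> {..<N}" "1 \<le> card S" for S
  proof -
    have finS: "finite S" by (rule finite_subset[OF S(1)]) simp
    obtain e where e0: "bij_betw e {0..<card S} S" using ex_bij_betw_nat_finite[OF finS] by blast
    then have e: "bij_betw e {..<card S} S" by (simp add: atLeast0LessThan)
    define Y where "Y i = Z (e i)" for i
    have ind: "O.indep_vars (\<lambda>_. P) Y {..<card S}"
      using O.indep_vars_reindex_sub[OF Z_indep, of e "{..<card S}"] e S(1)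
      unfolding Y_def bij_betw_def by auto
    have dis: "\<forall>i<card S. distr \<Omega> P (Y i) = P"
      using Z_distr e S(1) unfolding Y_def bij_betw_def by auto
    have st: "(\<integral>\<^sup>+ \<omega>. (SUP w. ennreal \<bar>exp_loss P f w - emp_loss f (\<lambda>i. Y i \<omega>) {..<card S} w\<bar>) \<partial>\<Omega>) \<le> ennreal (stat_acc \<gamma> \<alpha> (card S))"
      using stat_acc[rule_format, OF S(2), of Y] ind dis by blast
    have "emp_loss f (\<lambda>i. Y i \<omega>) {..<card S} w = E S \<omega> w" for \<omega> w
      unfolding Y_def E_def emp_loss_def using sum.reindex_bij_betw[OF e, of "\<lambda>i. f w (Z i \<omega>)"] by simp
    then show ?thesis using st by (simp add: L_def)
  qed
  have Econt: "continuous_on UNIV (\<lambda>w. E S \<omega> w)" if S: "S \<subseteq> {..<N}" and \<omega>: "\<omega> \<in> space \<Omega>" for S \<omega>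
    unfolding E_def by (rule cont_emp, rule fcont, rule Zsp) (use S \<omega> in auto)
  have Rcont: "continuous_on UNIV (\<lambda>w. R S \<omega> w)" if S: "S \<subseteq> {..<N}" and \<omega>: "\<omega> \<in> space \<Omega>" for S \<omega>
    unfolding R_def by (rule cont_reg, rule fcont, rule Zsp) (use S \<omega> in auto)
  have Ameas: "(\<lambda>\<omega>. SUP w. ennreal \<bar>L w - E S \<omega> w\<bar>) \<in> borel_measurable \<Omega>" if S: "S \<subseteq> {..<N}" for S
  proof (rule meas_SUP_cont)
    fix \<omega> assume "\<omega> \<in> space \<Omega>"
    then have "continuous_on UNIV (\<lambda>w. E S \<omega> w)" using Econt S by blast
    then show "continuous_on UNIV (\<lambda>w. ennreal \<bar>L w - E S \<omega> w\<bar>)"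
      by (intro continuous_on_ennreal continuous_on_rabs continuous_on_diff Lcont)
  next
    fix w
    have [measurable]: "(\<lambda>\<omega>. E S \<omega> w) \<in> borel_measurable \<Omega>" unfolding E_def
      by (rule meas_emp[OF f_meas, where g="\<lambda>_. w"]) (use S Zm in auto)
    show "(\<lambda>\<omega>. ennreal \<bar>L w - E S \<omega> w\<bar>) \<in> borel_measurable \<Omega>" by measurable
  qed
  have SUPeq: "(SUP w. ennreal (a - R S \<omega> w)) = ennreal (a - R S \<omega> w0)"
    if "\<And>w. R S \<omega> w0 \<le> R S \<omega> w" for a S \<omega> w0
    using SUP_min_eq[of "R S \<omega>" w0 a] that by simp
  have Rm_meas: "(\<lambda>\<omega>. R S \<omega> (g \<omega>)) \<in> borel_measurable \<Omega>"
    if "S \<subseteq> {..<N}" "g \<in> borel_measurable \<Omega>" for S g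
    unfolding R_def by (rule meas_reg[OF f_meas]) (use that Zm in auto)
  have Dmeas: "(\<lambda>\<omega>. ennreal (R S \<omega> (g \<omega>) - R S \<omega> (ws \<omega>))) \<in> borel_measurable \<Omega>"
    if S: "S \<subseteq> {..<N}" and g: "g \<in> borel_measurable \<Omega>"
      and ws: "\<forall>\<omega>\<in>space \<Omega>. \<forall>w. R S \<omega> (ws \<omega>) \<le> R S \<omega> w" for S g ws
  proof -
    have "(\<lambda>\<omega>. SUP w. ennreal (R S \<omega> (g \<omega>) - R S \<omega> w)) \<in> borel_measurable \<Omega>"
    proof (rule meas_SUP_cont)
      fix \<omega> assume "\<omega> \<in> space \<Omega>"
      then have "continuous_on UNIV (\<lambda>w. R S \<omega> w)" using Rcont S by blast
      then show "continuous_on UNIV (\<lambda>w. ennreal (R S \<omega> (g \<omega>) - R S \<omega> w))"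
        by (intro continuous_on_ennreal continuous_on_diff continuous_on_const)
    next
      fix w
      have [measurable]: "(\<lambda>\<omega>. R S \<omega> (g \<omega>)) \<in> borel_measurable \<Omega>" by (rule Rm_meas[OF S g])
      have [measurable]: "(\<lambda>\<omega>. R S \<omega> w) \<in> borel_measurable \<Omega>"
        using Rm_meas[OF S borel_measurable_const[of w]] by simp
      show "(\<lambda>\<omega>. ennreal (R S \<omega> (g \<omega>) - R S \<omega> w)) \<in> borel_measurable \<Omega>" by measurable
    qed
    then show ?thesis
      by (rule measurable_cong[THEN iffD1, rotated]) (simp add: SUPeq ws)
  qed
  have wmstar': "\<forall>\<omega>\<in>space \<Omega>. \<forall>w. R Im \<omega> (wmstar \<omega>) \<le> R Im \<omega> w"
    using wmstar unfolding R_def by blast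
  have wnstar': "\<forall>\<omega>\<in>space \<Omega>. \<forall>w. R In \<omega> (wnstar \<omega>) \<le> R In \<omega> w"
    using wnstar unfolding R_def by blast
  define A where "A S \<omega> = (SUP w. ennreal \<bar>L w - E S \<omega> w\<bar>)" for S \<omega>
  define C0 where "C0 = (t - 1) * cn * (norm wstar)\<^sup>2"
  define Xv where "Xv \<omega> = R In \<omega> (wm \<omega>) - R In \<omega> (wnstar \<omega>)" for \<omega>
  define Dm where "Dm \<omega> = ennreal (R Im \<omega> (wm \<omega>) - R Im \<omega> (wmstar \<omega>))" for \<omega>
  have Ale: "ennreal \<bar>L w - E S \<omega> w\<bar> \<le> A S \<omega>" for S \<omega> w unfolding A_def by (rule SUP_upper) simp
  have C00: "C0 \<ge> 0" unfolding C0_def using t1 cn0 by simp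
  have pw: "ennreal (Xv \<omega>) \<le> Dm \<omega> + A Im \<omega> + A Im' \<omega> + ennreal (2 * (t - 1)) * A In \<omega> + ennreal C0"
    if \<omega>: "\<omega> \<in> space \<Omega>" for \<omega>
  proof -
    define wa where "wa = wm \<omega>"
    define wb where "wb = wnstar \<omega>"
    have h1: "E In \<omega> wa = (E Im \<omega> wa + E Im' \<omega> wa) / 2" by (rule E_split)
    have h2: "E In \<omega> wb = (E Im \<omega> wb + E Im' \<omega> wb) / 2" by (rule E_split)
    have "R Im \<omega> (wmstar \<omega>) \<le> R Im \<omega> wb" using wmstar' \<omega> by blast
    then have h3: "R Im \<omega> (wmstar \<omega>) \<le> E Im \<omega> wb + t * cn * (norm wb)\<^sup>2"
      using R_eq[of Im \<omega> wb] card cm by simp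
    have "R In \<omega> wb \<le> R In \<omega> wstar" using wnstar' \<omega> unfolding wb_def by blast
    then have h4: "E In \<omega> wb + cn * (norm wb)\<^sup>2 \<le> E In \<omega> wstar + cn * (norm wstar)\<^sup>2"
      using R_eq[of In \<omega> wb] R_eq[of In \<omega> wstar] card cnn by simp
    have h5: "L wstar \<le> L wb" using wstar unfolding L_def by blast
    note kr = key_real[where lnM = "E In \<omega> wa" and lnS = "E In \<omega> wb" and lnW = "E In \<omega> wstar"
      and aM = "E Im \<omega> wa" and aS = "E Im \<omega> wb" and bM = "E Im' \<omega> wa" and bS = "E Im' \<omega> wb"
      and LM = "L wa" and LS = "L wb" and LW = "L wstar" and NM = "(norm wa)\<^sup>2" and NS = "(norm wb)\<^sup>2"
      and NW = "(norm wstar)\<^sup>2" and RmStar = "R Im \<omega> (wmstar \<omega>)" and cn = cn and t = t, OF h1 h2 h3 h4 h5 t1 cn0 zero_le_power2]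
    define dd where "dd = R Im \<omega> wa - R Im \<omega> (wmstar \<omega>)"
    define p where "p = (\<bar>L wa - E Im \<omega> wa\<bar> + \<bar>L wb - E Im \<omega> wb\<bar>) / 2"
    define q where "q = (\<bar>L wa - E Im' \<omega> wa\<bar> + \<bar>L wb - E Im' \<omega> wb\<bar>) / 2"
    define r0 where "r0 = (\<bar>L wstar - E In \<omega> wstar\<bar> + \<bar>L wb - E In \<omega> wb\<bar>) / 2"
    have XvE: "Xv \<omega> = (E In \<omega> wa + cn * (norm wa)\<^sup>2) - (E In \<omega> wb + cn * (norm wb)\<^sup>2)"
      unfolding Xv_def wa_def[symmetric] wb_def[symmetric] using R_eq[of In \<omega>] card cnn by simp
    have ddE: "dd = E Im \<omega> wa + t * cn * (norm wa)\<^sup>2 - R Im \<omega> (wmstar \<omega>)"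
      unfolding dd_def using R_eq[of Im \<omega> wa] card cm by simp
    have r: "Xv \<omega> \<le> dd + p + q + (2 * (t - 1)) * r0 + C0"
      using kr unfolding XvE ddE p_def q_def r0_def C0_def by (simp add: field_simps)
    have dd0: "dd \<ge> 0" unfolding dd_def using wmstar' \<omega> by simp
    have p0: "p \<ge> 0" "q \<ge> 0" "r0 \<ge> 0" unfolding p_def q_def r0_def by simp_all
    have t0: "2 * (t - 1) \<ge> 0" using t1 by simp
    have "ennreal (Xv \<omega>) \<le> ennreal (dd + p + q + (2 * (t - 1)) * r0 + C0)" using r by (rule ennreal_leI)
    also have "\<dots> = ennreal dd + ennreal p + ennreal q + ennreal (2 * (t - 1)) * ennreal r0 + ennreal C0"
      using dd0 p0 t0 C00 by (simp add: ennreal_mult)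
    also have "\<dots> \<le> Dm \<omega> + A Im \<omega> + A Im' \<omega> + ennreal (2 * (t - 1)) * A In \<omega> + ennreal C0"
    proof (intro add_mono mult_left_mono order_refl)
      show "ennreal dd \<le> Dm \<omega>" unfolding dd_def Dm_def wa_def ..
      show "ennreal p \<le> A Im \<omega>" unfolding p_def by (intro avg_le Ale)
      show "ennreal q \<le> A Im' \<omega>" unfolding q_def by (intro avg_le Ale)
      show "ennreal r0 \<le> A In \<omega>" unfolding r0_def by (intro avg_le Ale)
    qed simp
    finally show ?thesis .
  qed
  have mA: "(\<lambda>\<omega>. A S \<omega>) \<in> borel_measurable \<Omega>" if "S \<subseteq> {..<N}" for S
    unfolding A_def by (rule Ameas[OF that])
  have mDm: "(\<lambda>\<omega>. Dm \<omega>) \<in> borel_measurable \<Omega>"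
    unfolding Dm_def by (rule Dmeas[OF _ wm_meas wmstar']) (use sub in auto)
  have mX: "(\<lambda>\<omega>. ennreal (Xv \<omega>)) \<in> borel_measurable \<Omega>"
    unfolding Xv_def by (rule Dmeas[OF sub(2) wm_meas wnstar'])
  have mA1 [measurable]: "(\<lambda>\<omega>. A Im \<omega>) \<in> borel_measurable \<Omega>" using mA sub by blast
  have mA2 [measurable]: "(\<lambda>\<omega>. A Im' \<omega>) \<in> borel_measurable \<Omega>" using mA Im'sub by blast
  have mA3 [measurable]: "(\<lambda>\<omega>. A In \<omega>) \<in> borel_measurable \<Omega>" using mA sub by blast
  have mDm' [measurable]: "(\<lambda>\<omega>. Dm \<omega>) \<in> borel_measurable \<Omega>" by (rule mDm)
  define k where "k = ennreal (2 * (t - 1))"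
  have intDm: "(\<integral>\<^sup>+\<omega>. Dm \<omega> \<partial>\<Omega>) \<le> ennreal Vm"
    using wm_acc unfolding Dm_def R_def Vm_def .
  have intA1: "(\<integral>\<^sup>+\<omega>. A Im \<omega> \<partial>\<Omega>) \<le> ennreal Vm"
    using statS[of Im] sub card m unfolding A_def Vm_def by simp
  have intA2: "(\<integral>\<^sup>+\<omega>. A Im' \<omega> \<partial>\<Omega>) \<le> ennreal Vm"
    using statS[of Im'] Im'sub cardIm' m unfolding A_def Vm_def by simp
  have intA3: "(\<integral>\<^sup>+\<omega>. A In \<omega> \<partial>\<Omega>) \<le> ennreal Vn"
    using statS[of In] sub card m n unfolding A_def Vn_def by simp
  have intX: "(\<integral>\<^sup>+\<omega>. ennreal (Xv \<omega>) \<partial>\<Omega>) \<le> ennreal (3 * Vm + 2 * (t - 1) * Vn + C0)"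
  proof -
    have "(\<integral>\<^sup>+\<omega>. ennreal (Xv \<omega>) \<partial>\<Omega>)
        \<le> (\<integral>\<^sup>+\<omega>. Dm \<omega> + A Im \<omega> + A Im' \<omega> + k * A In \<omega> + ennreal C0 \<partial>\<Omega>)"
      unfolding k_def by (rule nn_integral_mono) (rule pw)
    also have "\<dots> = (\<integral>\<^sup>+\<omega>. Dm \<omega> \<partial>\<Omega>) + (\<integral>\<^sup>+\<omega>. A Im \<omega> \<partial>\<Omega>) + (\<integral>\<^sup>+\<omega>. A Im' \<omega> \<partial>\<Omega>)
        + k * (\<integral>\<^sup>+\<omega>. A In \<omega> \<partial>\<Omega>) + ennreal C0"
    proof -
      have e1: "(\<integral>\<^sup>+\<omega>. (Dm \<omega> + A Im \<omega> + A Im' \<omega> + k * A In \<omega>) + ennreal C0 \<partial>\<Omega>)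
          = (\<integral>\<^sup>+\<omega>. Dm \<omega> + A Im \<omega> + A Im' \<omega> + k * A In \<omega> \<partial>\<Omega>) + (\<integral>\<^sup>+\<omega>. ennreal C0 \<partial>\<Omega>)"
        by (rule nn_integral_add) measurable
      have e2: "(\<integral>\<^sup>+\<omega>. (Dm \<omega> + A Im \<omega> + A Im' \<omega>) + k * A In \<omega> \<partial>\<Omega>)
          = (\<integral>\<^sup>+\<omega>. Dm \<omega> + A Im \<omega> + A Im' \<omega> \<partial>\<Omega>) + (\<integral>\<^sup>+\<omega>. k * A In \<omega> \<partial>\<Omega>)"
        by (rule nn_integral_add) measurable
      have e3: "(\<integral>\<^sup>+\<omega>. (Dm \<omega> + A Im \<omega>) + A Im' \<omega> \<partial>\<Omega>)
          = (\<integral>\<^sup>+\<omega>. Dm \<omega> + A Im \<omega> \<partial>\<Omega>) + (\<integral>\<^sup>+\<omega>. A Im' \<omega> \<partial>\<Omega>)"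
        by (rule nn_integral_add) measurable
      have e4: "(\<integral>\<^sup>+\<omega>. Dm \<omega> + A Im \<omega> \<partial>\<Omega>) = (\<integral>\<^sup>+\<omega>. Dm \<omega> \<partial>\<Omega>) + (\<integral>\<^sup>+\<omega>. A Im \<omega> \<partial>\<Omega>)"
        by (rule nn_integral_add) measurable
      have e5: "(\<integral>\<^sup>+\<omega>. k * A In \<omega> \<partial>\<Omega>) = k * (\<integral>\<^sup>+\<omega>. A In \<omega> \<partial>\<Omega>)"
        by (rule nn_integral_cmult) measurable
      show ?thesis using e1 e2 e3 e4 e5 by (simp add: O.emeasure_space_1)
    qed
    also have "\<dots> \<le> ennreal Vm + ennreal Vm + ennreal Vm + k * ennreal Vn + ennreal C0"
      by (intro add_mono mult_left_mono intDm intA1 intA2 intA3 order_refl) simp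
    also have "\<dots> = ennreal (3 * Vm + 2 * (t - 1) * Vn + C0)"
      unfolding k_def using Vnpos t1 C00 Vrel
      by (simp add: ennreal_mult[symmetric] ennreal_plus[symmetric] del: ennreal_plus)
    finally show ?thesis .
  qed
  define F where "F p = ennreal (R In (fst p) (U (fst p) (wm (fst p)) sn (snd p)) - R In (fst p) (wnstar (fst p)))"
    for p :: "'o \<times> 'x"
  have Fmeas: "F \<in> borel_measurable (\<Omega> \<Otimes>\<^sub>M \<Xi>)"
  proof -
    have Um [measurable]: "(\<lambda>p. U (fst p) (wm (fst p)) sn (snd p)) \<in> borel_measurable (\<Omega> \<Otimes>\<^sub>M \<Xi>)"
      using wn_meas by (simp add: case_prod_unfold)
    have Zf: "(\<lambda>p. Z i (fst p)) \<in> measurable (\<Omega> \<Otimes>\<^sub>M \<Xi>) P" if "i < N" for i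
      using measurable_compose[OF measurable_fst[of \<Omega> \<Xi>] Zm[OF that]] by simp
    have RP: "(\<lambda>p. R S (fst p) (g p)) \<in> borel_measurable (\<Omega> \<Otimes>\<^sub>M \<Xi>)"
      if S: "S \<subseteq> {..<N}" and g: "g \<in> borel_measurable (\<Omega> \<Otimes>\<^sub>M \<Xi>)" for S g
      unfolding R_def by (rule meas_reg[OF f_meas g]) (use S Zf in auto)
    have "(\<lambda>p. SUP w. ennreal (R In (fst p) (U (fst p) (wm (fst p)) sn (snd p)) - R In (fst p) w))
        \<in> borel_measurable (\<Omega> \<Otimes>\<^sub>M \<Xi>)"
    proof (rule meas_SUP_cont)
      fix p assume "p \<in> space (\<Omega> \<Otimes>\<^sub>M \<Xi>)"
      then have "fst p \<in> space \<Omega>" by (auto simp: space_pair_measure)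
      then have "continuous_on UNIV (\<lambda>w. R In (fst p) w)" using Rcont sub(2) by blast
      then show "continuous_on UNIV (\<lambda>w. ennreal (R In (fst p) (U (fst p) (wm (fst p)) sn (snd p)) - R In (fst p) w))"
        by (intro continuous_on_ennreal continuous_on_diff continuous_on_const)
    next
      fix w
      have [measurable]: "(\<lambda>p. R In (fst p) (U (fst p) (wm (fst p)) sn (snd p))) \<in> borel_measurable (\<Omega> \<Otimes>\<^sub>M \<Xi>)"
        by (rule RP[OF sub(2) Um])
      have [measurable]: "(\<lambda>p. R In (fst p) w) \<in> borel_measurable (\<Omega> \<Otimes>\<^sub>M \<Xi>)"
        using RP[OF sub(2) borel_measurable_const[of w]] by simp
      show "(\<lambda>p. ennreal (R In (fst p) (U (fst p) (wm (fst p)) sn (snd p)) - R In (fst p) w)) \<in> borel_measurable (\<Omega> \<Otimes>\<^sub>M \<Xi>)"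
        by measurable
    qed
    then show ?thesis
    proof (rule measurable_cong[THEN iffD1, rotated])
      fix p assume "p \<in> space (\<Omega> \<Otimes>\<^sub>M \<Xi>)"
      then have "fst p \<in> space \<Omega>" by (auto simp: space_pair_measure)
      then show "(SUP w. ennreal (R In (fst p) (U (fst p) (wm (fst p)) sn (snd p)) - R In (fst p) w)) = F p"
        unfolding F_def using wnstar' by (simp add: SUPeq)
    qed
  qed
  define K where "K = 3 * t + (t - 1) * (2 + c / 2 * (norm wstar)\<^sup>2)"
  have Kpos: "K > 0" unfolding K_def using t1 c by (simp add: add_pos_nonneg)
  have KV: "3 * Vm + 2 * (t - 1) * Vn + C0 = K * Vn"
    unfolding K_def C0_def cn_def Vrel by (simp add: algebra_simps)
  have rhoK: "\<rho> ^ sn * K \<le> 1"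
  proof -
    have lr: "ln \<rho> < 0" using \<rho> by simp
    have "- ln K / ln \<rho> \<le> real sn" using sn unfolding K_def t_def .
    then have "real sn * ln \<rho> \<le> (- ln K / ln \<rho>) * ln \<rho>"
      by (rule mult_right_mono_neg) (use lr in simp)
    then have "real sn * ln \<rho> \<le> - ln K" using lr by simp
    then have "exp (real sn * ln \<rho>) \<le> exp (- ln K)" by simp
    moreover have "exp (real sn * ln \<rho>) = \<rho> ^ sn"
      using \<rho> by (simp add: ln_realpow[symmetric])
    moreover have "exp (- ln K) = 1 / K" using Kpos by (simp add: exp_minus inverse_eq_divide)
    ultimately have "\<rho> ^ sn \<le> 1 / K" by simp
    then show ?thesis using Kpos by (simp add: field_simps)
  qed
  have rho0: "\<rho> ^ sn \<ge> 0" using \<rho> by simp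
  have "(\<integral>\<^sup>+p. F p \<partial>(\<Omega> \<Otimes>\<^sub>M \<Xi>)) = (\<integral>\<^sup>+\<omega>. \<integral>\<^sup>+\<xi>. F (\<omega>, \<xi>) \<partial>\<Xi> \<partial>\<Omega>)"
    using X.nn_integral_fst[OF Fmeas] by simp
  also have "\<dots> \<le> (\<integral>\<^sup>+\<omega>. ennreal (\<rho> ^ sn * Xv \<omega>) \<partial>\<Omega>)"
  proof (rule nn_integral_mono)
    fix \<omega> assume \<omega>: "\<omega> \<in> space \<Omega>"
    from lin_conv[rule_format, OF \<omega>, of "wm \<omega>" sn]
    show "(\<integral>\<^sup>+\<xi>. F (\<omega>, \<xi>) \<partial>\<Xi>) \<le> ennreal (\<rho> ^ sn * Xv \<omega>)"
      unfolding F_def Xv_def R_def by simp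
  qed
  also have "\<dots> = ennreal (\<rho> ^ sn) * (\<integral>\<^sup>+\<omega>. ennreal (Xv \<omega>) \<partial>\<Omega>)"
  proof -
    have "\<And>\<omega>. ennreal (\<rho> ^ sn * Xv \<omega>) = ennreal (\<rho> ^ sn) * ennreal (Xv \<omega>)"
      by (rule ennreal_mult'[OF rho0])
    then show ?thesis using nn_integral_cmult[OF mX, of "ennreal (\<rho> ^ sn)"] by simp
  qed
  also have "\<dots> \<le> ennreal (\<rho> ^ sn) * ennreal (K * Vn)"
    using intX KV by (intro mult_left_mono) simp_all
  also have "\<dots> = ennreal (\<rho> ^ sn * K * Vn)" using rho0 by (simp add: ennreal_mult'[symmetric] mult.assoc)
  also have "\<dots> \<le> ennreal Vn"
  proof (rule ennreal_leI)
    show "\<rho> ^ sn * K * Vn \<le> Vn" using rhoK Vnpos mult_right_mono[OF rhoK, of Vn] by simp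
  qed
  finally have fin: "(\<integral>\<^sup>+p. F p \<partial>(\<Omega> \<Otimes>\<^sub>M \<Xi>)) \<le> ennreal Vn" .
  then show ?thesis unfolding F_def R_def Vn_def .
qed

end
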